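(* Let $m\ge 1$ and $n=2^m$. Consider the algorithm $\textsc{MergeShuffle}$ on an array $T$ of $n$ elements with cut-off $k=m$: $T$ is divided into $2^m$ blocks of size $1$ (each trivially shuffled, with no random bits used), and then for $p=0,1,\dots,m-1$ each pair of adjacent blocks of size $2^p$ is merged into a block of size $2^{p+1}$ by the procedure $\textsc{Merge}$ (defined in the context). Then the expected total number of random bits used is $n\log_2 n+\Theta(n)$ as $n\to\infty$.
   Context: The procedure $\textsc{Merge}(T,s,n_1,n_2)$: set $i\gets s$, $j\gets s+n_1$, $n\gets s+n_1+n_2$. Repeat: draw an independent fair random bit; if it is $0$, then break out of the loop if $i=j$; if it is $1$, then break out of the loop if $j=n$, and otherwise swap $T[i]$ and $T[j]$ and set $j\gets j+1$; in either non-breaking case set $i\gets i+1$. After the loop, while $i<n$: draw an integer $m$ uniformly at random from $\{s,\dots,i\}$ (independently of everything else), swap $T[i]$ and $T[m]$, and set $i\gets i+1$. Cost model: each fair bit drawn costs one random bit, and drawing a uniform integer from a set of $K$ elements costs $\lceil \log_2 K\rceil$ random bits. *)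

theory Defs
  imports "HOL-Probability.Probability" "HOL-Library.Landau_Symbols"
begin

text \<open>Random-bit cost of drawing a uniform integer from a set of K elements.\<close>
definition unif_cost :: "nat \<Rightarrow> nat" where
  "unif_cost K = nat \<lceil>log 2 (real K)\<rceil>"

definition fair_bit :: "nat pmf" where
  "fair_bit = pmf_of_set {0, 1}"

text \<open>Cost of the final loop of Merge: for i' = i, ..., n-1 a uniform integer
  is drawn from {s..i'}, which has i' - s + 1 elements.\<close>
definition merge_tail_cost :: "nat \<Rightarrow> nat \<Rightarrow> nat \<Rightarrow> nat" where
  "merge_tail_cost s n i = (\<Sum>i'\<in>{i..<n}. unif_cost (i' - s + 1))"

text \<open>Distribution of the number of random bits consumed by the main loop of Merge
  (and everything after) from state (i, j), with fixed s and n.  The array contents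
  do not influence the number of random bits, so they are not tracked.
  Outside the invariant s \<le> i \<le> j \<le> n (never reached) we return 0.\<close>
function merge_loop_cost :: "nat \<Rightarrow> nat \<Rightarrow> nat \<Rightarrow> nat \<Rightarrow> nat pmf" where
  "merge_loop_cost s n i j =
     (if \<not> (s \<le> i \<and> i \<le> j \<and> j \<le> n) then return_pmf 0 else
      bind_pmf fair_bit (\<lambda>b.
        if b = 0 then
          (if i = j then return_pmf (1 + merge_tail_cost s n i)
           else map_pmf (\<lambda>c. 1 + c) (merge_loop_cost s n (i + 1) j))
        else
          (if j = n then return_pmf (1 + merge_tail_cost s n i)
           else map_pmf (\<lambda>c. 1 + c) (merge_loop_cost s n (i + 1) (j + 1)))))"
  by pat_completeness auto
termination
  by (relation "Wellfounded.measure (\<lambda>(s, n, i, j). n - i)") auto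

definition merge_cost :: "nat \<Rightarrow> nat \<Rightarrow> nat \<Rightarrow> nat pmf" where
  "merge_cost s n1 n2 = merge_loop_cost s (s + n1 + n2) s (s + n1)"

text \<open>Sum of the costs of the merges of pass p (blocks of size 2^p, n = 2^m):
  blocks are merged one after another with fresh independent randomness;
  the q-th merge (q < k) starts at position q * 2^(p+1).\<close>
fun pass_cost :: "nat \<Rightarrow> nat \<Rightarrow> nat pmf" where
  "pass_cost p 0 = return_pmf 0"
| "pass_cost p (Suc q) =
     bind_pmf (pass_cost p q) (\<lambda>x.
       map_pmf (\<lambda>y. x + y) (merge_cost (q * 2 ^ (p + 1)) (2 ^ p) (2 ^ p)))"

text \<open>Total random bits used by MergeShuffle on n = 2^m elements with cut-off k = m:
  blocks of size 1 cost nothing, then passes p = 0, ..., m-1.\<close>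
fun passes_cost :: "nat \<Rightarrow> nat \<Rightarrow> nat pmf" where
  "passes_cost m 0 = return_pmf 0"
| "passes_cost m (Suc p) =
     bind_pmf (passes_cost m p) (\<lambda>x.
       map_pmf (\<lambda>y. x + y) (pass_cost p (2 ^ (m - Suc p))))"

definition mergeshuffle_cost :: "nat \<Rightarrow> nat pmf" where
  "mergeshuffle_cost m = passes_cost m m"

end

theory Submission
  imports Defs
begin

lemma set_fair_bit: "set_pmf fair_bit = {0,1}"
  by (simp add: fair_bit_def)

lemma fin_loop: "finite (set_pmf (merge_loop_cost s n i j))"
proof (induction s n i j rule: merge_loop_cost.induct)
  case (1 s n i j)
  show ?case
    apply (subst merge_loop_cost.simps)
    using 1 by (auto simp: set_fair_bit simp del: merge_loop_cost.simps)
qed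

lemma exp_fair: assumes "\<And>b. finite (set_pmf (g b))"
  shows "measure_pmf.expectation (bind_pmf fair_bit g) (f::nat\<Rightarrow>real)
     = (measure_pmf.expectation (g 0) f + measure_pmf.expectation (g 1) f) / 2"
  unfolding fair_bit_def
  by (subst pmf_expectation_bind_pmf_of_set) (auto simp: assms)

lemma exp_map_plus1: assumes "finite (set_pmf M)"
  shows "measure_pmf.expectation (map_pmf (\<lambda>c. 1 + c) M) real = 1 + measure_pmf.expectation M real"
proof -
  have "measure_pmf.expectation (map_pmf (\<lambda>c. 1 + c) M) real = measure_pmf.expectation M (\<lambda>c. 1 + real c)"
    by simp
  also have "\<dots> = 1 + measure_pmf.expectation M real"
    using assms by (subst Bochner_Integration.integral_add) (auto intro: integrable_measure_pmf_finite)
  finally show ?thesis .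
qed

lemma unif_le: assumes "1 \<le> K" "K \<le> 2^q" shows "unif_cost K \<le> q"
proof -
  have "log 2 (real K) \<le> log 2 (2^q)"
    using assms by (subst log_le_cancel_iff) auto
  also have "\<dots> = q" by (simp add: log_pow_cancel)
  finally have "\<lceil>log 2 (real K)\<rceil> \<le> int q" by (intro ceiling_le) simp
  thus ?thesis unfolding unif_cost_def by (subst nat_le_iff)
qed

lemma unif_ge: assumes "2 \<le> K" shows "1 \<le> unif_cost K"
proof -
  have "0 < log 2 (real K)" using assms by simp
  hence "1 \<le> \<lceil>log 2 (real K)\<rceil>" by (simp add: one_le_ceiling)
  thus ?thesis unfolding unif_cost_def by linarith
qed

lemma tail_le: assumes "n - s \<le> 2^q" "s \<le> i" shows "merge_tail_cost s n i \<le> (n - i) * q"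
proof -
  have "merge_tail_cost s n i \<le> (\<Sum>i'\<in>{i..<n}. q)"
    unfolding merge_tail_cost_def
    by (rule sum_mono, rule unif_le) (use assms in auto)
  thus ?thesis by simp
qed

lemma tail_ge: assumes "s < i" shows "n - i \<le> merge_tail_cost s n i"
proof -
  have "(\<Sum>i'\<in>{i..<n}. 1) \<le> merge_tail_cost s n i"
    unfolding merge_tail_cost_def
    by (rule sum_mono, rule unif_ge) (use assms in auto)
  thus ?thesis by simp
qed


definition Psi :: "real \<Rightarrow> nat \<Rightarrow> nat \<Rightarrow> real" where
  "Psi t x y = ((real x - real y)^2 + real x + real y + t^2)/(2*t)"

lemma Psi_nonneg: "t > 0 \<Longrightarrow> 0 \<le> Psi t x y"
  unfolding Psi_def by (intro divide_nonneg_pos) auto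

lemma Psi_y: assumes "t > 0" shows "(real (Suc y) + Psi t 0 y)/2 \<le> Psi t 0 (Suc y)"
proof -
  have eq: "Psi t 0 (Suc y) - (real (Suc y) + Psi t 0 y)/2 = ((real y + 1 - t)^2 + 3*(real y + 1))/(4*t)"
    using assms unfolding Psi_def by (simp add: field_simps power2_eq_square)
  have "0 \<le> ((real y + 1 - t)^2 + 3*(real y + 1))/(4*t)"
    using assms by (intro divide_nonneg_pos) auto
  thus ?thesis using eq by linarith
qed

lemma Psi_sym: "Psi t x y = Psi t y x"
  unfolding Psi_def by (simp add: power2_commute add_ac)

lemma Psi_int: assumes "t > 0"
  shows "(Psi t x (Suc y) + Psi t (Suc x) y)/2 = Psi t (Suc x) (Suc y)"
  using assms unfolding Psi_def by (simp add: field_simps power2_eq_square)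

lemma Psi_step: assumes "t > 0"
  shows "((if x=0 then real y else Psi t (x-1) y) + (if y = 0 then real x else Psi t x (y-1)))/2 \<le> Psi t x y"
proof (cases x)
  case 0
  then show ?thesis
  proof (cases y)
    case 0 with \<open>x = 0\<close> show ?thesis using Psi_nonneg[OF assms, of 0 0] by simp
  next
    case (Suc y') with \<open>x = 0\<close> show ?thesis using Psi_y[OF assms, of y'] by simp
  qed
next
  case (Suc x')
  then show ?thesis
  proof (cases y)
    case 0 with Suc show ?thesis using Psi_y[OF assms, of x'] Psi_sym[of t] by (simp add: add.commute)
  next
    case (Suc y') with \<open>x = Suc x'\<close> show ?thesis using Psi_int[OF assms, of x' y'] by simp
  qed
qed


declare merge_loop_cost.simps[simp del]

lemma exp_plus1': assumes "finite (set_pmf M)"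
  shows "measure_pmf.expectation M (\<lambda>c. 1 + real c) = 1 + measure_pmf.expectation M real"
  using assms by (subst Bochner_Integration.integral_add) (auto intro: integrable_measure_pmf_finite)

lemma unfold_loop:
  assumes "s \<le> i" "i \<le> j" "j \<le> n"
  shows "merge_loop_cost s n i j = bind_pmf fair_bit (\<lambda>b.
        if b = 0 then
          (if i = j then return_pmf (1 + merge_tail_cost s n i)
           else map_pmf (\<lambda>c. 1 + c) (merge_loop_cost s n (i + 1) j))
        else
          (if j = n then return_pmf (1 + merge_tail_cost s n i)
           else map_pmf (\<lambda>c. 1 + c) (merge_loop_cost s n (i + 1) (j + 1))))"
  by (subst merge_loop_cost.simps) (simp add: assms del: merge_loop_cost.simps)

lemma exp_loop:
  assumes "s \<le> i" "i \<le> j" "j \<le> n"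
  shows "measure_pmf.expectation (merge_loop_cost s n i j) real =
     ((if i = j then 1 + real (merge_tail_cost s n i)
           else 1 + measure_pmf.expectation (merge_loop_cost s n (i + 1) j) real)
      + (if j = n then 1 + real (merge_tail_cost s n i)
           else 1 + measure_pmf.expectation (merge_loop_cost s n (i + 1) (j + 1)) real)) / 2"
  apply (subst unfold_loop[OF assms])
  apply (subst exp_fair)
   apply (auto simp: fin_loop exp_plus1')
  done

lemma loop_upper:
  "n - s \<le> 2^q \<Longrightarrow> 1 \<le> q \<Longrightarrow> t > 0 \<Longrightarrow> s \<le> i \<Longrightarrow> i \<le> j \<Longrightarrow> j \<le> n \<Longrightarrow>
   measure_pmf.expectation (merge_loop_cost s n i j) real
     \<le> real (n-i) + 1 + (real q - 1) * Psi t (j-i) (n-j)"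
proof (induction s n i j rule: merge_loop_cost.induct)
  case (1 s n i j)
  note P = "1.prems"
  define Q where "Q = real q - 1"
  have Q0: "0 \<le> Q" using P unfolding Q_def by simp
  have tl: "real (merge_tail_cost s n i) \<le> real (n - i) + Q * real (n - i)"
  proof -
    have "merge_tail_cost s n i \<le> (n - i) * q" using tail_le P by blast
    hence "real (merge_tail_cost s n i) \<le> real (n - i) * real q"
      by (metis of_nat_le_iff of_nat_mult)
    thus ?thesis unfolding Q_def by (simp add: algebra_simps)
  qed
  have A0: "(if i = j then 1 + real (merge_tail_cost s n i)
           else 1 + measure_pmf.expectation (merge_loop_cost s n (i + 1) j) real)
        \<le> real (n-i) + 1 + Q * (if j - i = 0 then real (n - j) else Psi t (j - i - 1) (n - j))"
  proof (cases "i = j")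
    case True then show ?thesis using tl by simp
  next
    case False
    have "measure_pmf.expectation (merge_loop_cost s n (i + 1) j) real
          \<le> real (n-(i+1)) + 1 + (real q - 1) * Psi t (j-(i+1)) (n-j)"
      using "1.IH"(1)[of 0] P False by (simp add: set_fair_bit)
    moreover have "real (n-(i+1)) + 1 = real (n - i)" using P False by simp
    moreover have "j - (i+1) = j - i - 1" by simp
    ultimately show ?thesis using False P unfolding Q_def by simp
  qed
  have A1: "(if j = n then 1 + real (merge_tail_cost s n i)
           else 1 + measure_pmf.expectation (merge_loop_cost s n (i + 1) (j + 1)) real)
        \<le> real (n-i) + 1 + Q * (if n - j = 0 then real (j - i) else Psi t (j - i) (n - j - 1))"
  proof (cases "j = n")
    case True then show ?thesis using tl by simp
  next
    case False
    have "measure_pmf.expectation (merge_loop_cost s n (i + 1) (j+1)) real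
          \<le> real (n-(i+1)) + 1 + (real q - 1) * Psi t (j+1-(i+1)) (n-(j+1))"
      using "1.IH"(2)[of 1] P False by (simp add: set_fair_bit)
    moreover have "real (n-(i+1)) + 1 = real (n - i)" using P False by simp
    moreover have "n - (j+1) = n - j - 1" by simp
    ultimately show ?thesis using False P unfolding Q_def by simp
  qed
  have st: "((if j - i = 0 then real (n - j) else Psi t (j - i - 1) (n - j))
            + (if n - j = 0 then real (j - i) else Psi t (j - i) (n - j - 1)))/2 \<le> Psi t (j-i) (n-j)"
    using Psi_step[of t "j-i" "n-j"] P by simp
  have "measure_pmf.expectation (merge_loop_cost s n i j) real
     \<le> ((real (n-i) + 1 + Q * (if j - i = 0 then real (n - j) else Psi t (j - i - 1) (n - j)))
       + (real (n-i) + 1 + Q * (if n - j = 0 then real (j - i) else Psi t (j - i) (n - j - 1))))/2"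
    using exp_loop[of s i j n] P A0 A1 by simp
  also have "\<dots> = real (n-i) + 1 + Q * (((if j - i = 0 then real (n - j) else Psi t (j - i - 1) (n - j))
            + (if n - j = 0 then real (j - i) else Psi t (j - i) (n - j - 1)))/2)"
    by (simp add: algebra_simps add_divide_distrib)
  also have "\<dots> \<le> real (n-i) + 1 + Q * Psi t (j-i) (n-j)"
    by (rule add_left_mono, rule mult_left_mono[OF st Q0])
  finally show ?case unfolding Q_def .
qed

lemma loop_lower:
  "s \<le> i \<Longrightarrow> i \<le> j \<Longrightarrow> j \<le> n \<Longrightarrow> (s < i \<or> (i < j \<and> j < n)) \<Longrightarrow>
   real (n-i) + 1 \<le> measure_pmf.expectation (merge_loop_cost s n i j) real"
proof (induction s n i j rule: merge_loop_cost.induct)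
  case (1 s n i j)
  note P = "1.prems"
  have A0: "real (n-i) + 1 \<le> (if i = j then 1 + real (merge_tail_cost s n i)
           else 1 + measure_pmf.expectation (merge_loop_cost s n (i + 1) j) real)"
  proof (cases "i = j")
    case True
    hence "s < i" using P by auto
    then show ?thesis using tail_ge[of s i n] True by simp
  next
    case False
    have "real (n-(i+1)) + 1 \<le> measure_pmf.expectation (merge_loop_cost s n (i + 1) j) real"
      using "1.IH"(1)[of 0] P False by (simp add: set_fair_bit)
    moreover have "real (n-(i+1)) + 1 = real (n - i)" using P False by simp
    ultimately show ?thesis using False by simp
  qed
  have A1: "real (n-i) + 1 \<le> (if j = n then 1 + real (merge_tail_cost s n i)
           else 1 + measure_pmf.expectation (merge_loop_cost s n (i + 1) (j + 1)) real)"
  proof (cases "j = n")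
    case True
    hence "s < i" using P by auto
    then show ?thesis using tail_ge[of s i n] True by simp
  next
    case False
    have "real (n-(i+1)) + 1 \<le> measure_pmf.expectation (merge_loop_cost s n (i + 1) (j+1)) real"
      using "1.IH"(2)[of 1] P False by (simp add: set_fair_bit)
    moreover have "real (n-(i+1)) + 1 = real (n - i)" using P False by simp
    ultimately show ?thesis using False by simp
  qed
  show ?case using exp_loop[of s i j n] P A0 A1 by simp
qed


lemma merge_upper:
  "measure_pmf.expectation (merge_cost s (2^p) (2^p)) real \<le> 2^(p+1) + 1 + real p * sqrt (2^(p+1))"
proof -
  define t where "t = sqrt (2^(p+1) :: real)"
  have t0: "t > 0" unfolding t_def by simp
  have "measure_pmf.expectation (merge_loop_cost s (s + 2^p + 2^p) s (s + 2^p)) real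
     \<le> real (s + 2^p + 2^p - s) + 1 + (real (p+1) - 1) * Psi t (s + 2^p - s) (s + 2^p + 2^p - (s + 2^p))"
    by (rule loop_upper) (auto simp: t0)
  also have "Psi t (s + 2^p - s) (s + 2^p + 2^p - (s + 2^p)) = t"
  proof -
    have "Psi t (s + 2^p - s) (s + 2^p + 2^p - (s + 2^p)) = (2^(p+1)) / t"
      unfolding Psi_def t_def by simp
    also have "\<dots> = t" unfolding t_def by (rule real_div_sqrt) simp
    finally show ?thesis .
  qed
  finally show ?thesis unfolding merge_cost_def t_def by simp
qed

lemma merge_lower:
  "2^(p+1) + 1 \<le> measure_pmf.expectation (merge_cost s (2^p) (2^p)) real"
proof -
  have "real (s + 2^p + 2^p - s) + 1 \<le> measure_pmf.expectation (merge_loop_cost s (s + 2^p + 2^p) s (s + 2^p)) real"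
    by (rule loop_lower) auto
  thus ?thesis unfolding merge_cost_def by simp
qed

lemma fin_merge: "finite (set_pmf (merge_cost s a b))"
  unfolding merge_cost_def by (rule fin_loop)

lemma fin_pass: "finite (set_pmf (pass_cost p k))"
  by (induction k) (auto simp: fin_merge)

lemma fin_passes: "finite (set_pmf (passes_cost m P))"
  by (induction P) (auto simp: fin_pass)

lemma exp_plus_c: assumes "finite (set_pmf B)"
  shows "measure_pmf.expectation B (\<lambda>y. real a + real y) = real a + measure_pmf.expectation B real"
  using assms by (subst Bochner_Integration.integral_add) (auto intro: integrable_measure_pmf_finite)

lemma exp_sum: assumes "finite (set_pmf A)" "finite (set_pmf B)"
  shows "measure_pmf.expectation (bind_pmf A (\<lambda>x. map_pmf (\<lambda>y. x + y) B)) real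
     = measure_pmf.expectation A real + measure_pmf.expectation B real"
proof -
  have "measure_pmf.expectation (bind_pmf A (\<lambda>x. map_pmf (\<lambda>y. x + y) B)) real
     = (\<Sum>a\<in>set_pmf A. pmf A a *\<^sub>R measure_pmf.expectation (map_pmf (\<lambda>y. a + y) B) real)"
    using assms by (intro pmf_expectation_bind) auto
  also have "\<dots> = (\<Sum>a\<in>set_pmf A. pmf A a * real a + pmf A a * measure_pmf.expectation B real)"
    using assms by (intro sum.cong refl) (simp add: exp_plus_c algebra_simps)
  also have "\<dots> = (\<Sum>a\<in>set_pmf A. pmf A a * real a) + (\<Sum>a\<in>set_pmf A. pmf A a) * measure_pmf.expectation B real"
    by (simp add: sum.distrib sum_distrib_right)
  also have "(\<Sum>a\<in>set_pmf A. pmf A a) = 1"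
    using assms by (intro sum_pmf_eq_1) auto
  also have "(\<Sum>a\<in>set_pmf A. pmf A a * real a) = measure_pmf.expectation A real"
    using assms by (subst integral_measure_pmf[of "set_pmf A"]) auto
  finally show ?thesis by simp
qed

lemma exp_pass: "measure_pmf.expectation (pass_cost p k) real
   = (\<Sum>q<k. measure_pmf.expectation (merge_cost (q * 2 ^ (p + 1)) (2 ^ p) (2 ^ p)) real)"
  by (induction k) (simp_all add: exp_sum fin_pass fin_merge)

lemma exp_passes: "measure_pmf.expectation (passes_cost m P) real
   = (\<Sum>p<P. measure_pmf.expectation (pass_cost p (2 ^ (m - Suc p))) real)"
  by (induction P) (simp_all add: exp_sum fin_pass fin_passes)

lemma pass_lower: "real k * (2^(p+1) + 1) \<le> measure_pmf.expectation (pass_cost p k) real"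
proof -
  have "(\<Sum>q<k. (2^(p+1) + 1 :: real)) \<le> (\<Sum>q<k. measure_pmf.expectation (merge_cost (q * 2 ^ (p + 1)) (2 ^ p) (2 ^ p)) real)"
    by (rule sum_mono) (rule merge_lower)
  thus ?thesis by (simp add: exp_pass)
qed

lemma pass_upper: "measure_pmf.expectation (pass_cost p k) real \<le> real k * (2^(p+1) + 1 + real p * sqrt (2^(p+1)))"
proof -
  have "(\<Sum>q<k. measure_pmf.expectation (merge_cost (q * 2 ^ (p + 1)) (2 ^ p) (2 ^ p)) real) \<le> (\<Sum>q<k. (2^(p+1) + 1 + real p * sqrt (2^(p+1)) :: real))"
    by (rule sum_mono) (rule merge_upper)
  thus ?thesis by (simp add: exp_pass)
qed

lemma geo_sum: assumes "0 \<le> r" "r < 1"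
  shows "(\<Sum>p<P. real (p+1) * r^(p+1)) \<le> r / (1-r)^2"
proof -
  have id: "(\<Sum>p<P. real (p+1) * r^(p+1)) * (1-r)^2 = r - real (P+1) * r^(P+1) + real P * r^(P+2)" for P
    by (induction P) (simp_all add: algebra_simps power2_eq_square)
  have "real P * r^(P+2) \<le> real (P+1) * r^(P+1)"
  proof -
    have "real P * r^(P+2) = (real P * r) * r^(P+1)" by simp
    also have "\<dots> \<le> real (P+1) * r^(P+1)"
      using assms mult_left_le[of r "real P"] by (intro mult_right_mono) auto
    finally show ?thesis .
  qed
  hence "(\<Sum>p<P. real (p+1) * r^(p+1)) * (1-r)^2 \<le> r" using id[of P] by linarith
  thus ?thesis using assms by (simp add: pos_le_divide_eq)
qed


lemma k_eq: "p < m \<Longrightarrow> real (2 ^ (m - Suc p)) * 2^(p+1) = (2::real)^m"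
proof -
  assume "p < m"
  hence "m - Suc p + (p+1) = m" by simp
  hence "(2::real)^(m - Suc p) * 2^(p+1) = 2^m" by (metis power_add)
  thus ?thesis by simp
qed

lemma term_low: "p < m \<Longrightarrow> 2^m + real (2 ^ (m - Suc p)) \<le> measure_pmf.expectation (pass_cost p (2 ^ (m - Suc p))) real"
  using pass_lower[of "2 ^ (m - Suc p)" p] k_eq[of p m] by (simp add: algebra_simps)

definition rr :: real where "rr = 1 / sqrt 2"

lemma term_up: assumes "p < m"
  shows "measure_pmf.expectation (pass_cost p (2 ^ (m - Suc p))) real \<le> 2^m + 2^m * (real (p+1) * rr^(p+1))"
proof -
  define s where "s = sqrt 2 ^ (p+1)"
  define k where "k = real (2 ^ (m - Suc p))"
  have s1: "1 \<le> s" unfolding s_def by (rule one_le_power) simp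
  have sq: "sqrt (2^(p+1)) = s" unfolding s_def by (rule real_sqrt_power)
  have X: "(2::real)^(p+1) = s^2"
  proof -
    have h: "sqrt(2^(p+1))^2 = (2::real)^(p+1)" by (rule real_sqrt_pow2) simp
    show ?thesis using h[unfolded sq] by (rule sym)
  qed
  have r: "rr^(p+1) = 1/s" unfolding s_def rr_def by (simp add: power_one_over)
  have k: "k * s^2 = 2^m" using k_eq[OF assms] X unfolding k_def by simp
  have k0: "0 \<le> k" unfolding k_def by simp
  have "measure_pmf.expectation (pass_cost p (2 ^ (m - Suc p))) real \<le> k * (s^2 + 1 + real p * s)"
    using pass_upper[of p "2 ^ (m - Suc p)"] sq X unfolding k_def by simp
  also have "\<dots> = k * s^2 + k * s^2 * ((1 + real p * s) / s^2)"
    using s1 by (simp add: field_simps)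
  also have "(1 + real p * s) / s^2 \<le> real (p+1) * rr^(p+1)"
  proof -
    have "1 + real p * s \<le> (real p + 1) * s" using s1 by (simp add: algebra_simps)
    hence "(1 + real p * s) / s^2 \<le> (real p + 1) * s / s^2"
      using s1 by (intro divide_right_mono) auto
    also have "\<dots> = real (p+1) * rr^(p+1)" using s1 unfolding r by (simp add: power2_eq_square)
    finally show ?thesis .
  qed
  finally show ?thesis unfolding k using k0 by (simp add: mult_left_mono)
qed


lemma rr_bounds: "0 \<le> rr" "rr < 1"
  unfolding rr_def by auto

definition CC :: real where "CC = rr / (1 - rr)^2"

lemma CC_pos: "0 \<le> CC" unfolding CC_def using rr_bounds by simp

lemma total_low: assumes "1 \<le> m"
  shows "real m * 2^m + 2^m / 2 \<le> measure_pmf.expectation (mergeshuffle_cost m) real"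
proof -
  have "(\<Sum>p<m. 2^m + real (2 ^ (m - Suc p))) \<le> (\<Sum>p<m. measure_pmf.expectation (pass_cost p (2 ^ (m - Suc p))) real)"
    by (rule sum_mono) (rule term_low, simp)
  moreover have "real (2 ^ (m - Suc 0)) \<le> (\<Sum>p<m. real (2 ^ (m - Suc p)))"
    using assms by (intro member_le_sum[of 0 "{..<m}" "\<lambda>p. real (2 ^ (m - Suc p))"]) auto
  moreover have "real (2 ^ (m - Suc 0)) = (2::real)^m / 2"
  proof -
    have "(2::real)^m = 2^(Suc (m - Suc 0))" using assms by simp
    thus ?thesis by simp
  qed
  ultimately show ?thesis unfolding mergeshuffle_cost_def exp_passes by (simp add: sum.distrib)
qed

lemma total_up:
  shows "measure_pmf.expectation (mergeshuffle_cost m) real \<le> real m * 2^m + 2^m * CC"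
proof -
  have "(\<Sum>p<m. measure_pmf.expectation (pass_cost p (2 ^ (m - Suc p))) real) \<le> (\<Sum>p<m. 2^m + 2^m * (real (p+1) * rr^(p+1)))"
    by (rule sum_mono) (rule term_up, simp)
  also have "\<dots> = real m * 2^m + 2^m * (\<Sum>p<m. real (p+1) * rr^(p+1))"
    by (simp add: sum.distrib sum_distrib_left)
  also have "(\<Sum>p<m. real (p+1) * rr^(p+1)) \<le> CC"
    unfolding CC_def using rr_bounds by (rule geo_sum)
  finally show ?thesis unfolding mergeshuffle_cost_def exp_passes by simp
qed

theorem mainTheorem3:
  shows "(\<lambda>m::nat. measure_pmf.expectation (mergeshuffle_cost m) real
            - real (2 ^ m) * log 2 (real (2 ^ m)))
         \<in> \<Theta>(\<lambda>m. real (2 ^ m))"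
proof (rule bigthetaI'[of "1/2" "1 + CC"])
  show "0 < (1/2::real)" by simp
  show "0 < 1 + CC" using CC_pos by simp
  show "\<forall>\<^sub>F x in at_top. 1 / 2 * norm (real (2 ^ x)) \<le> norm (measure_pmf.expectation (mergeshuffle_cost x) real - real (2 ^ x) * log 2 (real (2 ^ x))) \<and>
         norm (measure_pmf.expectation (mergeshuffle_cost x) real - real (2 ^ x) * log 2 (real (2 ^ x))) \<le> (1 + CC) * norm (real (2 ^ x))"
    unfolding eventually_at_top_linorder
  proof (intro exI[of _ 1] allI impI)
    fix m :: nat assume m: "1 \<le> m"
    have lg: "log 2 (real (2 ^ m)) = real m" by (simp add: log_pow_cancel)
    define E where "E = measure_pmf.expectation (mergeshuffle_cost m) real"
    have lo: "real m * 2^m + 2^m / 2 \<le> E" using total_low[OF m] unfolding E_def .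
    have up: "E \<le> real m * 2^m + 2^m * CC" using total_up unfolding E_def .
    have p: "(0::real) < 2^m" by simp
    define D where "D = E - real m * 2^m"
    have D1: "2^m/2 \<le> D" using lo unfolding D_def by linarith
    have D2: "D \<le> CC * 2^m" using up unfolding D_def by (simp add: mult.commute)
    have eqD: "E - real (2 ^ m) * log 2 (real (2 ^ m)) = D" unfolding lg D_def by simp
    have "0 \<le> D" using D1 p by linarith
    hence nD: "norm D = D" by simp
    have n2: "norm (real (2 ^ m)) = (2::real)^m" by simp
    have "1 / 2 * norm (real (2 ^ m)) \<le> norm (E - real (2 ^ m) * log 2 (real (2 ^ m))) \<and>
         norm (E - real (2 ^ m) * log 2 (real (2 ^ m))) \<le> (1 + CC) * norm (real (2 ^ m))"
      unfolding eqD nD n2 using D1 D2 p by (simp add: algebra_simps, linarith)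
    thus "1 / 2 * norm (real (2 ^ m)) \<le> norm (measure_pmf.expectation (mergeshuffle_cost m) real - real (2 ^ m) * log 2 (real (2 ^ m))) \<and>
         norm (measure_pmf.expectation (mergeshuffle_cost m) real - real (2 ^ m) * log 2 (real (2 ^ m))) \<le> (1 + CC) * norm (real (2 ^ m))"
      unfolding E_def .
  qed
qed

end
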